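(* Let $n,m,v\ge1$ and let $S(n,m,v)$ be a memory system satisfying Processor Symmetry and Location Symmetry. Let $\Omega$ be a simple witness for $S(n,m,v)$ and let $\tau$ be an unambiguous trace of $S(n,m,v)$. If the graph $G(\Omega)(\tau)$ has a $k$-nice cycle, then there is an unambiguous trace $\tau''$ of $S(n,m,v)$ such that $G(\Omega)(\tau'')$ has a canonical $k$-nice cycle.
   Context: $\mathbb{N}_n=\{1,\dots,n\}$, $\mathbb{W}_v=\{0,\dots,v\}$. Memory events $E(n,m,v)=\{R,W\}\times\mathbb{N}_n\times\mathbb{N}_m\times\mathbb{W}_v$; for $e=\langle a,b,c,d\rangle$, $op(e)=a$, $proc(e)=b$, $loc(e)=c$, $data(e)=d$; $0$ models the initial value of every location. A memory system $S(n,m,v)$ is a regular set of finite runs over an alphabet containing $E(n,m,v)$ (other letters being internal events); a trace is the subsequence of memory events of a run. For a sequence $\tau$ of memory events with positions $1,\dots,|\tau|$: $P(\tau,i)=\{k: proc(\tau(k))=i\}$, $L(\tau,j)=\{k: loc(\tau(k))=j\}$, $L^w(\tau,j)=\{k\in L(\tau,j): op(\tau(k))=W\}$, $M(\tau,i)=\{\langle u,v\rangle: u,v\in P(\tau,i), u<v\}$. A trace $\tau$ is unambiguous if for every location $j$ and $x\in L^w(\tau,j)$, $data(\tau(x))\ne0$ and $data(\tau(x))\ne data(\tau(y))$ for all $y\in L^w(\tau,j)\setminus\{x\}$. Symmetry: for a permutation $\lambda$ of $\mathbb{N}_n$, $\lambda^p(\langle a,b,c,d\rangle)=\langle a,\lambda(b),c,d\rangle$;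 for a permutation $\lambda$ of $\mathbb{N}_m$, $\lambda^l(\langle a,b,c,d\rangle)=\langle a,b,\lambda(c),d\rangle$; both extended letterwise to sequences. Processor Symmetry: for every permutation $\lambda$ of $\mathbb{N}_n$ and every trace $\tau$ of $S(n,m,v)$, $\lambda^p(\tau)$ is a trace of $S(n,m,v)$. Location Symmetry: for every permutation $\lambda$ of $\mathbb{N}_m$ and every trace $\tau$ of $S(n,m,v)$, $\lambda^l(\tau)$ is a trace of $S(n,m,v)$. A witness $\Omega$ assigns to each trace $\tau$ and location $j$ a strict total order $\Omega(\tau,j)$ on $L^w(\tau,j)$; it is simple if $\langle x,y\rangle\in\Omega(\tau,j)$ iff $x<y$. For unambiguous $\tau$, $\Omega^e(\tau,j)\subseteq L(\tau,j)^2$: $\langle x,y\rangle\in\Omega^e(\tau,j)$ iff (1) $data(\tau(x))=data(\tau(y))$, $op(\tau(x))=W$, $op(\tau(y))=R$; or (2) $data(\tau(x))=0$ and $data(\tau(y))\ne0$; or (3) there are $a,b\in L^w(\tau,j)$ with $\langle a,b\rangle\in\Omega(\tau,j)$, $data(\tau(a))=data(\tau(x))$, $data(\tau(b))=data(\tau(y))$. $G(\Omega)(\tau)$ is the directed graph on $\{1,\dots,|\tau|\}$ with edge set $\bigcup_{i}M(\tau,i)\cup\bigcup_{j}\Omega^e(\tau,j)$. For $k\ge1$, $\oplus$ is addition in the cyclic group on $\mathbb{N}_k$ with identity $k$ ($x\oplus1=x+1$ for $x<k$, $k\oplus1=1$). A $k$-nice cycle in $G(\Omega)(\tau)$ is a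 sequence $u_1,v_1,\dots,u_k,v_k$ of pairwise distinct vertices such that: (i) for every $x$, $\langle u_x,v_x\rangle\in M(\tau,i)$ for some processor $i$ and $\langle v_x,u_{x\oplus1}\rangle\in\Omega^e(\tau,j)$ for some location $j$; (ii) the processors $i$ for distinct $x$ are distinct; (iii) the locations $j$ for distinct $x$ are distinct. A $k$-nice cycle is canonical if $\langle u_x,v_x\rangle\in M(\tau,x)$ and $\langle v_x,u_{x\oplus1}\rangle\in\Omega^e(\tau,x\oplus1)$ for all $1\le x\le k$. *)

theory Defs
  imports Main
begin

datatype opr = R | W

type_synonym event = "opr \<times> nat \<times> nat \<times> nat"

definition op :: "event \<Rightarrow> opr" where "op e = fst e"
definition proc :: "event \<Rightarrow> nat" where "proc e = fst (snd e)"
definition loc :: "event \<Rightarrow> nat" where "loc e = fst (snd (snd e))"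
definition data :: "event \<Rightarrow> nat" where "data e = snd (snd (snd e))"

definition Ev :: "nat \<Rightarrow> nat \<Rightarrow> nat \<Rightarrow> event set" where
  "Ev n m v = UNIV \<times> {1..n} \<times> {1..m} \<times> {0..v}"

datatype 'i letter = Mem event | Internal 'i

fun trace_of :: "'i letter list \<Rightarrow> event list" where
  "trace_of [] = []"
| "trace_of (Mem e # w) = e # trace_of w"
| "trace_of (Internal x # w) = trace_of w"

definition regular_over :: "'a set \<Rightarrow> 'a list set \<Rightarrow> bool" where
  "regular_over \<Sigma> L \<longleftrightarrow> finite \<Sigma> \<and>
     (\<exists>(Q::nat set) (\<delta>::nat \<Rightarrow> 'a \<Rightarrow> nat) q0 F.
        finite Q \<and> q0 \<in> Q \<and> F \<subseteq> Q \<and> (\<forall>q\<in>Q. \<forall>a\<in>\<Sigma>. \<delta> q a \<in> Q) \<and>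
        L = {w \<in> lists \<Sigma>. foldl \<delta> q0 w \<in> F})"

definition memory_system :: "nat \<Rightarrow> nat \<Rightarrow> nat \<Rightarrow> 'i letter set \<Rightarrow> 'i letter list set \<Rightarrow> bool" where
  "memory_system n m v \<Sigma> S \<longleftrightarrow>
     {e. Mem e \<in> \<Sigma>} = Ev n m v \<and> regular_over \<Sigma> S"

definition traces :: "'i letter list set \<Rightarrow> event list set" where
  "traces S = trace_of ` S"

definition ev :: "event list \<Rightarrow> nat \<Rightarrow> event" where
  "ev \<tau> k = \<tau> ! (k - 1)"

definition Pp :: "event list \<Rightarrow> nat \<Rightarrow> nat set" where
  "Pp \<tau> i = {k \<in> {1..length \<tau>}. proc (ev \<tau> k) = i}"

definition L :: "event list \<Rightarrow> nat \<Rightarrow> nat set" where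
  "L \<tau> j = {k \<in> {1..length \<tau>}. loc (ev \<tau> k) = j}"

definition Lw :: "event list \<Rightarrow> nat \<Rightarrow> nat set" where
  "Lw \<tau> j = {k \<in> L \<tau> j. op (ev \<tau> k) = W}"

definition M :: "event list \<Rightarrow> nat \<Rightarrow> (nat \<times> nat) set" where
  "M \<tau> i = {(u, w). u \<in> Pp \<tau> i \<and> w \<in> Pp \<tau> i \<and> u < w}"

definition unambiguous :: "event list \<Rightarrow> bool" where
  "unambiguous \<tau> \<longleftrightarrow> (\<forall>j. \<forall>x\<in>Lw \<tau> j. data (ev \<tau> x) \<noteq> 0 \<and>
      (\<forall>y\<in>Lw \<tau> j - {x}. data (ev \<tau> x) \<noteq> data (ev \<tau> y)))"

definition perm_p :: "(nat \<Rightarrow> nat) \<Rightarrow> event \<Rightarrow> event" where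
  "perm_p lam e = (op e, lam (proc e), loc e, data e)"

definition perm_l :: "(nat \<Rightarrow> nat) \<Rightarrow> event \<Rightarrow> event" where
  "perm_l lam e = (op e, proc e, lam (loc e), data e)"

definition processor_symmetry :: "nat \<Rightarrow> 'i letter list set \<Rightarrow> bool" where
  "processor_symmetry n S \<longleftrightarrow> (\<forall>lam \<tau>. bij_betw lam {1..n} {1..n} \<longrightarrow> \<tau> \<in> traces S \<longrightarrow>
      map (perm_p lam) \<tau> \<in> traces S)"

definition location_symmetry :: "nat \<Rightarrow> 'i letter list set \<Rightarrow> bool" where
  "location_symmetry m S \<longleftrightarrow> (\<forall>lam \<tau>. bij_betw lam {1..m} {1..m} \<longrightarrow> \<tau> \<in> traces S \<longrightarrow>
      map (perm_l lam) \<tau> \<in> traces S)"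

type_synonym witness = "event list \<Rightarrow> nat \<Rightarrow> (nat \<times> nat) set"

definition strict_total_order_on :: "'a set \<Rightarrow> ('a \<times> 'a) set \<Rightarrow> bool" where
  "strict_total_order_on A r \<longleftrightarrow> r \<subseteq> A \<times> A \<and> irrefl r \<and> trans r \<and> total_on A r"

definition is_witness :: "nat \<Rightarrow> 'i letter list set \<Rightarrow> witness \<Rightarrow> bool" where
  "is_witness m S \<Omega> \<longleftrightarrow> (\<forall>\<tau>\<in>traces S. \<forall>j\<in>{1..m}. strict_total_order_on (Lw \<tau> j) (\<Omega> \<tau> j))"

definition simple_witness :: "nat \<Rightarrow> 'i letter list set \<Rightarrow> witness \<Rightarrow> bool" where
  "simple_witness m S \<Omega> \<longleftrightarrow> is_witness m S \<Omega> \<and>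
     (\<forall>\<tau>\<in>traces S. \<forall>j\<in>{1..m}. \<forall>x\<in>Lw \<tau> j. \<forall>y\<in>Lw \<tau> j. (x, y) \<in> \<Omega> \<tau> j \<longleftrightarrow> x < y)"

definition Omega_e :: "witness \<Rightarrow> event list \<Rightarrow> nat \<Rightarrow> (nat \<times> nat) set" where
  "Omega_e \<Omega> \<tau> j = {(x, y). x \<in> L \<tau> j \<and> y \<in> L \<tau> j \<and>
     ((data (ev \<tau> x) = data (ev \<tau> y) \<and> op (ev \<tau> x) = W \<and> op (ev \<tau> y) = R)
      \<or> (data (ev \<tau> x) = 0 \<and> data (ev \<tau> y) \<noteq> 0)
      \<or> (\<exists>a\<in>Lw \<tau> j. \<exists>b\<in>Lw \<tau> j. (a, b) \<in> \<Omega> \<tau> j \<and>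
            data (ev \<tau> a) = data (ev \<tau> x) \<and> data (ev \<tau> b) = data (ev \<tau> y)))}"

text \<open>Edge set of the graph G(\<Omega>)(\<tau>) on vertices {1..|\<tau>|}.\<close>
definition G_edges :: "nat \<Rightarrow> nat \<Rightarrow> witness \<Rightarrow> event list \<Rightarrow> (nat \<times> nat) set" where
  "G_edges n m \<Omega> \<tau> = (\<Union>i\<in>{1..n}. M \<tau> i) \<union> (\<Union>j\<in>{1..m}. Omega_e \<Omega> \<tau> j)"

definition cplus1 :: "nat \<Rightarrow> nat \<Rightarrow> nat" where
  "cplus1 k x = (if x < k then x + 1 else 1)"

text \<open>A k-nice cycle u_1,v_1,...,u_k,v_k (given by functions us, vs on {1..k}).\<close>
definition nice_cycle :: "nat \<Rightarrow> nat \<Rightarrow> witness \<Rightarrow> event list \<Rightarrow> nat \<Rightarrow>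
    (nat \<Rightarrow> nat) \<Rightarrow> (nat \<Rightarrow> nat) \<Rightarrow> bool" where
  "nice_cycle n m \<Omega> \<tau> k us vs \<longleftrightarrow> k \<ge> 1 \<and>
     inj_on us {1..k} \<and> inj_on vs {1..k} \<and> us ` {1..k} \<inter> vs ` {1..k} = {} \<and>
     (\<exists>p l. (\<forall>x\<in>{1..k}. p x \<in> {1..n} \<and> (us x, vs x) \<in> M \<tau> (p x) \<and>
                         l x \<in> {1..m} \<and> (vs x, us (cplus1 k x)) \<in> Omega_e \<Omega> \<tau> (l x))
            \<and> inj_on p {1..k} \<and> inj_on l {1..k})"

definition canonical_nice_cycle :: "nat \<Rightarrow> nat \<Rightarrow> witness \<Rightarrow> event list \<Rightarrow> nat \<Rightarrow>
    (nat \<Rightarrow> nat) \<Rightarrow> (nat \<Rightarrow> nat) \<Rightarrow> bool" where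
  "canonical_nice_cycle n m \<Omega> \<tau> k us vs \<longleftrightarrow> nice_cycle n m \<Omega> \<tau> k us vs \<and>
     (\<forall>x\<in>{1..k}. (us x, vs x) \<in> M \<tau> x \<and>
                 (vs x, us (cplus1 k x)) \<in> Omega_e \<Omega> \<tau> (cplus1 k x))"

end

theory Submission imports Defs begin

lemma extend_perm:
  assumes "finite A" "D \<subseteq> A" "inj_on f D" "f ` D \<subseteq> A"
  shows "\<exists>lam. bij lam \<and> bij_betw lam A A \<and> (\<forall>x\<in>D. lam x = f x)"
proof -
  have fD: "finite D" using assms finite_subset by blast
  have "card (A - D) = card (A - f ` D)"
    using assms fD by (simp add: card_Diff_subset card_image)
  then obtain h where h: "bij_betw h (A - D) (A - f ` D)"
    using finite_same_card_bij assms(1) by (metis finite_Diff)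
  define lam where "lam x = (if x \<in> D then f x else if x \<in> A then h x else x)" for x
  have b1: "bij_betw lam D (f ` D)"
    using bij_betw_cong[of D lam f] inj_on_imp_bij_betw[OF assms(3)] lam_def by simp
  have b2: "bij_betw lam (A - D) (A - f ` D)"
    using bij_betw_cong[of "A - D" lam h] h lam_def by simp
  have e3: "\<And>x. x \<in> - A \<Longrightarrow> lam x = id x" using assms(2) lam_def by auto
  have b3: "bij_betw lam (- A) (- A)"
    using bij_betw_cong[of "- A" lam id "- A", OF e3] by simp
  have "bij_betw lam (D \<union> (A - D)) (f ` D \<union> (A - f ` D))"
    by (rule bij_betw_combine[OF b1 b2]) auto
  moreover have "D \<union> (A - D) = A" "f ` D \<union> (A - f ` D) = A" using assms by auto
  ultimately have bA: "bij_betw lam A A" by simp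
  have "bij_betw lam (A \<union> - A) (A \<union> - A)"
    by (rule bij_betw_combine[OF bA b3]) auto
  then have "bij lam" by simp
  then show ?thesis using bA lam_def by auto
qed

lemma ev_map: "k \<in> {1..length \<tau>} \<Longrightarrow> ev (map f \<tau>) k = f (ev \<tau> k)"
  unfolding ev_def by (subst nth_map) auto

locale tr =
  fixes f :: "event \<Rightarrow> event" and lp ll :: "nat \<Rightarrow> nat"
  assumes op_f: "op (f e) = op e" and data_f: "data (f e) = data e"
    and proc_f: "proc (f e) = lp (proc e)" and loc_f: "loc (f e) = ll (loc e)"
    and bp: "bij lp" and bl: "bij ll"
begin

lemma ip: "lp a = lp b \<longleftrightarrow> a = b" using bp by (metis bij_def inj_eq)
lemma il: "ll a = ll b \<longleftrightarrow> a = b" using bl by (metis bij_def inj_eq)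

lemma L_eq: "L (map f \<tau>) (ll j) = L \<tau> j"
  unfolding L_def by (auto simp: ev_map loc_f il)

lemma Lw_eq: "Lw (map f \<tau>) (ll j) = Lw \<tau> j"
  unfolding Lw_def L_eq by (auto simp: L_def ev_map op_f)

lemma Pp_eq: "Pp (map f \<tau>) (lp i) = Pp \<tau> i"
  unfolding Pp_def by (auto simp: ev_map proc_f ip)

lemma M_eq: "M (map f \<tau>) (lp i) = M \<tau> i"
  unfolding M_def Pp_eq ..

lemma unamb: "unambiguous \<tau> \<Longrightarrow> unambiguous (map f \<tau>)"
  unfolding unambiguous_def
proof (intro allI ballI)
  fix j x assume u: "\<forall>j. \<forall>x\<in>Lw \<tau> j. data (ev \<tau> x) \<noteq> 0 \<and> (\<forall>y\<in>Lw \<tau> j - {x}. data (ev \<tau> x) \<noteq> data (ev \<tau> y))"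
    and x: "x \<in> Lw (map f \<tau>) j"
  obtain j0 where j: "j = ll j0" using bl by (metis bij_pointE)
  have xl: "x \<in> Lw \<tau> j0" using x Lw_eq j by simp
  have xr: "x \<in> {1..length \<tau>}" using xl by (simp add: Lw_def L_def)
  show "data (ev (map f \<tau>) x) \<noteq> 0 \<and> (\<forall>y\<in>Lw (map f \<tau>) j - {x}. data (ev (map f \<tau>) x) \<noteq> data (ev (map f \<tau>) y))"
  proof (intro conjI ballI)
    show "data (ev (map f \<tau>) x) \<noteq> 0" using u xl xr by (simp add: ev_map data_f)
  next
    fix y assume y: "y \<in> Lw (map f \<tau>) j - {x}"
    then have yl: "y \<in> Lw \<tau> j0 - {x}" using Lw_eq j by simp
    have yr: "y \<in> {1..length \<tau>}" using yl by (simp add: Lw_def L_def)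
    show "data (ev (map f \<tau>) x) \<noteq> data (ev (map f \<tau>) y)"
      using u xl yl xr yr by (simp add: ev_map data_f)
  qed
qed

lemma Omega_eq:
  assumes "\<forall>a\<in>Lw \<tau> j. \<forall>b\<in>Lw \<tau> j. (a, b) \<in> \<Omega> (map f \<tau>) (ll j) \<longleftrightarrow> (a, b) \<in> \<Omega> \<tau> j"
  shows "Omega_e \<Omega> (map f \<tau>) (ll j) = Omega_e \<Omega> \<tau> j"
proof -
  have e1: "\<And>x. x \<in> L \<tau> j \<Longrightarrow> data (ev (map f \<tau>) x) = data (ev \<tau> x)"
    by (simp add: L_def ev_map data_f)
  have e2: "\<And>x. x \<in> L \<tau> j \<Longrightarrow> op (ev (map f \<tau>) x) = op (ev \<tau> x)"
    by (simp add: L_def ev_map op_f)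
  have e3: "\<And>x. x \<in> Lw \<tau> j \<Longrightarrow> data (ev (map f \<tau>) x) = data (ev \<tau> x)"
    using e1 by (simp add: Lw_def)
  have e4: "(\<exists>a\<in>Lw \<tau> j. \<exists>b\<in>Lw \<tau> j. (a, b) \<in> \<Omega> (map f \<tau>) (ll j) \<and>
            data (ev (map f \<tau>) a) = X \<and> data (ev (map f \<tau>) b) = Y) \<longleftrightarrow>
       (\<exists>a\<in>Lw \<tau> j. \<exists>b\<in>Lw \<tau> j. (a, b) \<in> \<Omega> \<tau> j \<and>
            data (ev \<tau> a) = X \<and> data (ev \<tau> b) = Y)" for X Y
    using assms e3 by metis
  show ?thesis
    unfolding Omega_e_def L_eq Lw_eq
    apply (rule Collect_cong)
    apply (rule prod.case_cong[OF refl])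
    apply (intro conj_cong refl disj_cong)
    apply (simp_all add: e1 e2 e4)
    done
qed

end

lemma cplus1_bij: "k \<ge> 1 \<Longrightarrow> inj_on (cplus1 k) {1..k} \<and> cplus1 k ` {1..k} \<subseteq> {1..k}"
  unfolding cplus1_def inj_on_def by auto

theorem theorem7p5:
  fixes n m v k :: nat
    and \<Sigma> :: "'i letter set" and S :: "'i letter list set"
    and \<Omega> :: witness and \<tau> :: "event list"
    and us vs :: "nat \<Rightarrow> nat"
  assumes "n \<ge> 1" and "m \<ge> 1" and "v \<ge> 1"
    and "memory_system n m v \<Sigma> S"
    and "processor_symmetry n S" and "location_symmetry m S"
    and "simple_witness m S \<Omega>"
    and "\<tau> \<in> traces S" and "unambiguous \<tau>"
    and "nice_cycle n m \<Omega> \<tau> k us vs"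
  shows "\<exists>\<tau>''\<in>traces S. unambiguous \<tau>'' \<and>
           (\<exists>us' vs'. canonical_nice_cycle n m \<Omega> \<tau>'' k us' vs')"
proof -
  note nc = assms(10)[unfolded nice_cycle_def]
  have k1: "k \<ge> 1" using nc by blast
  obtain p l where pl: "\<forall>x\<in>{1..k}. p x \<in> {1..n} \<and> (us x, vs x) \<in> M \<tau> (p x) \<and>
                         l x \<in> {1..m} \<and> (vs x, us (cplus1 k x)) \<in> Omega_e \<Omega> \<tau> (l x)"
    and ip: "inj_on p {1..k}" and il: "inj_on l {1..k}" using nc by blast
  have pn: "p ` {1..k} \<subseteq> {1..n}" and lm: "l ` {1..k} \<subseteq> {1..m}" using pl by auto
  have "card {1..k} \<le> card {1..n}" by (rule card_inj_on_le[OF ip pn]) simp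
  then have kn: "k \<le> n" by simp
  have "card {1..k} \<le> card {1..m}" by (rule card_inj_on_le[OF il lm]) simp
  then have km: "k \<le> m" by simp
  have ipi: "inv_into {1..k} p ` p ` {1..k} = {1..k}"
    by (rule inv_into_image_cancel[OF ip]) simp
  have ili: "inv_into {1..k} l ` l ` {1..k} = {1..k}"
    by (rule inv_into_image_cancel[OF il]) simp
  obtain lp where lp: "bij lp" "bij_betw lp {1..n} {1..n}"
      "\<forall>x\<in>p ` {1..k}. lp x = inv_into {1..k} p x"
    using extend_perm[of "{1..n}" "p ` {1..k}" "inv_into {1..k} p"] pn ipi kn
      inj_on_inv_into[of "p ` {1..k}" p "{1..k}"] by auto
  have lpp: "lp (p x) = x" if "x \<in> {1..k}" for x
    using lp(3) that inv_into_f_f[OF ip that] by auto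
  have cb: "inj_on (cplus1 k) {1..k}" "cplus1 k ` {1..k} \<subseteq> {1..k}"
    using cplus1_bij[OF k1] by auto
  have injf: "inj_on (cplus1 k \<circ> inv_into {1..k} l) (l ` {1..k})"
    using comp_inj_on[OF inj_on_inv_into[of "l ` {1..k}" l "{1..k}"]] cb ili by auto
  have imf: "(cplus1 k \<circ> inv_into {1..k} l) ` (l ` {1..k}) \<subseteq> {1..m}"
    unfolding image_comp[symmetric] ili using cb km by auto
  obtain ll where ll: "bij ll" "bij_betw ll {1..m} {1..m}"
      "\<forall>x\<in>l ` {1..k}. ll x = (cplus1 k \<circ> inv_into {1..k} l) x"
    using extend_perm[OF _ lm injf imf] by auto
  have lll: "ll (l x) = cplus1 k x" if "x \<in> {1..k}" for x
    using ll(3) that inv_into_f_f[OF il that] by auto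
  define g where "g = perm_p lp \<circ> perm_l ll"
  interpret T: tr g lp ll
    by unfold_locales (auto simp: g_def perm_p_def perm_l_def op_def data_def proc_def loc_def lp(1) ll(1))
  define \<tau>'' where "\<tau>'' = map g \<tau>"
  have t1: "map (perm_l ll) \<tau> \<in> traces S"
    using assms(6,8) ll(2) unfolding location_symmetry_def by blast
  have "map (perm_p lp) (map (perm_l ll) \<tau>) \<in> traces S"
    using assms(5) t1 lp(2) unfolding processor_symmetry_def by blast
  then have tS: "\<tau>'' \<in> traces S" by (simp add: \<tau>''_def g_def)
  have un: "unambiguous \<tau>''" using T.unamb[OF assms(9)] \<tau>''_def by simp
  have sw: "\<forall>\<tau>\<in>traces S. \<forall>j\<in>{1..m}. \<forall>x\<in>Lw \<tau> j. \<forall>y\<in>Lw \<tau> j. (x, y) \<in> \<Omega> \<tau> j \<longleftrightarrow> x < y"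
    using assms(7) unfolding simple_witness_def by blast
  have Meq: "M \<tau>'' x = M \<tau> (p x)" if "x \<in> {1..k}" for x
    using T.M_eq[of \<tau> "p x"] lpp[OF that] \<tau>''_def by simp
  have Oeq: "Omega_e \<Omega> \<tau>'' (cplus1 k x) = Omega_e \<Omega> \<tau> (l x)" if x: "x \<in> {1..k}" for x
  proof -
    have lx: "l x \<in> {1..m}" using pl x by blast
    have llx: "ll (l x) \<in> {1..m}" using lx ll(2) bij_betwE by blast
    have "\<forall>a\<in>Lw \<tau> (l x). \<forall>b\<in>Lw \<tau> (l x). (a, b) \<in> \<Omega> (map g \<tau>) (ll (l x)) \<longleftrightarrow> (a, b) \<in> \<Omega> \<tau> (l x)"
    proof (intro ballI)
      fix a b assume a: "a \<in> Lw \<tau> (l x)" and b: "b \<in> Lw \<tau> (l x)"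
      have a': "a \<in> Lw (map g \<tau>) (ll (l x))" and b': "b \<in> Lw (map g \<tau>) (ll (l x))"
        using a b T.Lw_eq by auto
      have "map g \<tau> \<in> traces S" using tS \<tau>''_def by simp
      then show "(a, b) \<in> \<Omega> (map g \<tau>) (ll (l x)) \<longleftrightarrow> (a, b) \<in> \<Omega> \<tau> (l x)"
        using sw assms(8) a b a' b' lx llx by blast
    qed
    then show ?thesis using T.Omega_eq lll[OF x] \<tau>''_def by metis
  qed
  have "canonical_nice_cycle n m \<Omega> \<tau>'' k us vs"
    unfolding canonical_nice_cycle_def nice_cycle_def
  proof (intro conjI)
    show "\<exists>p l. (\<forall>x\<in>{1..k}. p x \<in> {1..n} \<and> (us x, vs x) \<in> M \<tau>'' (p x) \<and>
                         l x \<in> {1..m} \<and> (vs x, us (cplus1 k x)) \<in> Omega_e \<Omega> \<tau>'' (l x))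
            \<and> inj_on p {1..k} \<and> inj_on l {1..k}"
    proof (intro exI conjI)
      show "\<forall>x\<in>{1..k}. x \<in> {1..n} \<and> (us x, vs x) \<in> M \<tau>'' x \<and>
                         cplus1 k x \<in> {1..m} \<and> (vs x, us (cplus1 k x)) \<in> Omega_e \<Omega> \<tau>'' (cplus1 k x)"
        using pl Meq Oeq kn km cb(2) by fastforce
      show "inj_on (\<lambda>x. x) {1..k}" by simp
      show "inj_on (cplus1 k) {1..k}" by (rule cb(1))
    qed
    show "\<forall>x\<in>{1..k}. (us x, vs x) \<in> M \<tau>'' x \<and> (vs x, us (cplus1 k x)) \<in> Omega_e \<Omega> \<tau>'' (cplus1 k x)"
      using pl Meq Oeq by simp
  qed (use nc in auto)
  then show ?thesis using tS un by blast
qed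

end
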